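(* Let $\mu$ be a Lévy measure as in the context and $\psi,\varphi\in L^\infty(\mathbb{R}^d)$. Then $$\int_{\mathbb{R}^d\times\mathbb{R}^d}|\psi(x+z)-\psi(x)|\,|\varphi(x+z)-\varphi(x)|\,d\mu(z)\,dx<\infty$$ if any one of the following holds: (i) $\psi,\varphi\in H^{\mathcal L}(\mathbb{R}^d)$; (ii) $\psi\in H^{\mathcal L}(\mathbb{R}^d)$, $\varphi$ is Lipschitz continuous, and $\psi$ or $\varphi$ has compact support; (iii) $\psi$ is of bounded variation, $\varphi$ is Lipschitz continuous, and $\psi$ or $\varphi$ has compact support; (iv) $\psi$ or $\varphi$ has compact support and $\mu(\mathbb{R}^d\setminus\{0\})<\infty$.
   Context: $\mu$ is a symmetric nonnegative Radon measure on $\mathbb{R}^d\setminus\{0\}$ with $\int(|z|^2\wedge1)\,d\mu(z)<\infty$. $H^{\mathcal L}(\mathbb{R}^d)$ denotes the space of $\phi\in L^2(\mathbb{R}^d)$ with $\int_{\mathbb{R}^d}\int_{\mathbb{R}^d}(\phi(x+z)-\phi(x))^2\,d\mu(z)\,dx<\infty$. *)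

theory Defs
  imports "HOL-Analysis.Analysis"
begin

text \<open>Levy measure on R^d (modelled as a Borel measure on the whole space giving no mass
  to the origin): symmetric, Radon on R^d minus the origin, and integrating min(|z|^2,1).\<close>
definition levy_measure :: "'a::euclidean_space measure \<Rightarrow> bool" where
  "levy_measure \<mu> \<longleftrightarrow>
     sets \<mu> = sets borel \<and>
     emeasure \<mu> {0} = 0 \<and>
     (\<forall>A \<in> sets borel. emeasure \<mu> (uminus ` A) = emeasure \<mu> A) \<and>
     (\<forall>K. compact K \<and> 0 \<notin> K \<longrightarrow> emeasure \<mu> K < \<infinity>) \<and>
     (\<integral>\<^sup>+ z. ennreal (min ((norm z)\<^sup>2) 1) \<partial>\<mu>) < \<infinity>"

definition Linf :: "('a::euclidean_space \<Rightarrow> real) \<Rightarrow> bool" where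
  "Linf f \<longleftrightarrow> f \<in> borel_measurable borel \<and> (\<exists>C. AE x in lborel. \<bar>f x\<bar> \<le> C)"

definition H_L :: "'a::euclidean_space measure \<Rightarrow> ('a \<Rightarrow> real) \<Rightarrow> bool" where
  "H_L \<mu> f \<longleftrightarrow> f \<in> borel_measurable borel \<and>
     (\<integral>\<^sup>+ x. ennreal ((f x)\<^sup>2) \<partial>lborel) < \<infinity> \<and>
     (\<integral>\<^sup>+ x. (\<integral>\<^sup>+ z. ennreal ((f (x + z) - f x)\<^sup>2) \<partial>\<mu>) \<partial>lborel) < \<infinity>"

definition has_compact_support :: "('a::euclidean_space \<Rightarrow> real) \<Rightarrow> bool" where
  "has_compact_support f \<longleftrightarrow> compact (closure {x. f x \<noteq> 0})"

definition C1_field :: "('a::euclidean_space \<Rightarrow> 'a) \<Rightarrow> bool" where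
  "C1_field g \<longleftrightarrow> (\<exists>D :: 'a \<Rightarrow> 'a \<Rightarrow>\<^sub>L 'a.
     (\<forall>x. (g has_derivative blinfun_apply (D x)) (at x)) \<and> continuous_on UNIV D)"

definition divergence :: "('a::euclidean_space \<Rightarrow> 'a) \<Rightarrow> 'a \<Rightarrow> real" where
  "divergence g x = (\<Sum>i\<in>Basis. frechet_derivative g (at x) i \<bullet> i)"

definition bounded_variation :: "('a::euclidean_space \<Rightarrow> real) \<Rightarrow> bool" where
  "bounded_variation f \<longleftrightarrow> integrable lborel f \<and>
     (\<exists>C. \<forall>g. C1_field g \<and> compact (closure {x. g x \<noteq> 0}) \<and> (\<forall>x. norm (g x) \<le> 1)
            \<longrightarrow> (\<integral>x. f x * divergence g x \<partial>lborel) \<le> C)"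

end

theory Submission
  imports Defs
begin

lemma levy_sigma_finite:
  fixes \<mu> :: "'a::euclidean_space measure"
  assumes "levy_measure \<mu>"
  shows "sigma_finite_measure \<mu>"
proof -
  have sets: "sets \<mu> = sets borel" and z: "emeasure \<mu> {0} = 0"
    and K: "\<And>K. compact K \<Longrightarrow> 0 \<notin> K \<Longrightarrow> emeasure \<mu> K < \<infinity>"
    using assms unfolding levy_measure_def by auto
  define A where "A n = {0} \<union> {x::'a. 1/(Suc n) \<le> norm x \<and> norm x \<le> Suc n}" for n
  have cA: "compact {x::'a. 1/(Suc n) \<le> norm x \<and> norm x \<le> Suc n}" for n
  proof (subst compact_eq_bounded_closed, intro conjI)
    show "bounded {x::'a. 1/(Suc n) \<le> norm x \<and> norm x \<le> Suc n}"
      by (rule bounded_subset[OF bounded_cball[of 0 "Suc n"]]) auto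
    show "closed {x::'a. 1/(Suc n) \<le> norm x \<and> norm x \<le> Suc n}"
      by (intro closed_Collect_conj closed_Collect_le continuous_intros)
  qed
  show ?thesis
  proof
    show "\<exists>A::'a set set. countable A \<and> A \<subseteq> sets \<mu> \<and> \<Union> A = space \<mu> \<and> (\<forall>a\<in>A. emeasure \<mu> a \<noteq> \<infinity>)"
    proof (intro exI[of _ "range A"] conjI ballI)
      show "countable (range A)" by simp
      show "range A \<subseteq> sets \<mu>"
        using cA by (auto simp: sets A_def intro!: sets.Un compact_imp_closed borel_closed)
      have "\<exists>n. x \<in> A n" for x :: 'a
      proof (cases "x = 0")
        case True then show ?thesis by (auto simp: A_def)
      next
        case False
        then have "norm x > 0" by simp
        obtain n where n1: "inverse (real (Suc n)) < norm x"
          using \<open>norm x > 0\<close> reals_Archimedean by blast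
        obtain m where m1: "norm x \<le> real m" using real_arch_simple by blast
        have "x \<in> A (max n m)"
        proof -
          have "1 / real (Suc (max n m)) \<le> 1 / real (Suc n)"
            by (intro divide_left_mono) auto
          moreover have "norm x \<le> real (Suc (max n m))" using m1 by simp
          moreover have "norm x * real n \<le> norm x * real (max n m)" by (intro mult_left_mono) auto
          ultimately show ?thesis using n1 by (auto simp: A_def field_simps)
        qed
        then show ?thesis by blast
      qed
      then show "\<Union> (range A) = space \<mu>" using sets_eq_imp_space_eq[OF sets] by auto
      fix a assume "a \<in> range A"
      then obtain n where a: "a = A n" by auto
      have "emeasure \<mu> a \<le> emeasure \<mu> {0} + emeasure \<mu> {x::'a. 1/(Suc n) \<le> norm x \<and> norm x \<le> Suc n}"
        unfolding a A_def
        by (rule emeasure_subadditive) (use cA in \<open>auto simp: sets intro!: compact_imp_closed borel_closed\<close>)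
      also have "\<dots> < \<infinity>" using z K[OF cA] by auto
      finally show "emeasure \<mu> a \<noteq> \<infinity>" by simp
    qed
  qed
qed

lemma nn_integral_lborel_translate:
  fixes f :: "'a::euclidean_space \<Rightarrow> ennreal"
  assumes "f \<in> borel_measurable borel"
  shows "(\<integral>\<^sup>+ x. f (x + z) \<partial>lborel) = (\<integral>\<^sup>+ x. f x \<partial>lborel)"
proof -
  have "(\<integral>\<^sup>+ x. f x \<partial>lborel) = (\<integral>\<^sup>+ x. f x \<partial>distr lborel borel ((+) z))"
    by (simp add: lborel_distr_plus)
  also have "\<dots> = (\<integral>\<^sup>+ x. f (z + x) \<partial>lborel)"
    by (rule nn_integral_distr) (use assms in auto)
  finally show ?thesis by (simp add: add.commute)
qed

lemma integral_lborel_translate: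
  fixes f :: "'a::euclidean_space \<Rightarrow> real"
  assumes "f \<in> borel_measurable borel"
  shows "(\<integral> x. f (x + z) \<partial>lborel) = (\<integral> x. f x \<partial>lborel)"
proof -
  have "(\<integral> x. f x \<partial>lborel) = (\<integral> x. f x \<partial>distr lborel borel ((+) z))"
    by (simp add: lborel_distr_plus)
  also have "\<dots> = (\<integral> x. f (z + x) \<partial>lborel)"
    by (rule integral_distr) (use assms in auto)
  finally show ?thesis by (simp add: add.commute)
qed

lemma integrable_lborel_translate:
  fixes f :: "'a::euclidean_space \<Rightarrow> real"
  assumes "integrable lborel f"
  shows "integrable lborel (\<lambda>x. f (x + z))"
proof -
  have "integrable (distr lborel borel ((+) z)) f" by (simp add: lborel_distr_plus assms)
  then have "integrable lborel (\<lambda>x. f (z + x))"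
    by (subst (asm) integrable_distr_eq) (use borel_measurable_integrable[OF assms] in auto)
  then show ?thesis by (simp add: add.commute)
qed

lemma AE_lborel_translate:
  fixes z :: "'a::euclidean_space"
  assumes "AE x in lborel. P x"
  shows "AE x in lborel. P (x + z)"
proof -
  have "AE x in distr lborel borel ((+) z). P x" by (subst lborel_distr_plus) (rule assms)
  then have "AE x in lborel. P (z + x)" by (rule AE_distrD[rotated]) auto
  then show ?thesis by (simp add: add.commute)
qed

lemma continuous_AE_bound_everywhere:
  fixes f :: "'a::euclidean_space \<Rightarrow> real"
  assumes "continuous_on UNIV f" "AE x in lborel. \<bar>f x\<bar> \<le> C"
  shows "\<bar>f x\<bar> \<le> C"
proof (rule ccontr)
  assume "\<not> \<bar>f x\<bar> \<le> C"
  define U where "U = {x. \<bar>f x\<bar> > C}"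
  have "open U" unfolding U_def
    by (rule open_Collect_less) (use assms(1) in \<open>auto intro!: continuous_intros\<close>)
  have "x \<in> U" using \<open>\<not> \<bar>f x\<bar> \<le> C\<close> by (simp add: U_def)
  have "emeasure lborel U = 0"
    using assms(2) \<open>open U\<close>
    by (subst AE_iff_measurable[symmetric, of U]) (auto simp: U_def not_le)
  moreover have "emeasure lborel U > 0"
  proof -
    obtain r where r: "r > 0" "ball x r \<subseteq> U" using \<open>open U\<close> \<open>x \<in> U\<close> open_contains_ball by blast
    have "0 < ennreal (measure lborel (ball x r))" using content_ball_pos[OF r(1), of x] by simp
    also have "\<dots> = emeasure lborel (ball x r)"
      using emeasure_lborel_ball_finite[of x r] by (simp add: emeasure_eq_ennreal_measure)
    also have "\<dots> \<le> emeasure lborel U" using r(2) \<open>open U\<close> by (intro emeasure_mono) auto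
    finally show ?thesis .
  qed
  ultimately show False by auto
qed

definition testfn :: "('a::euclidean_space \<Rightarrow> real) \<Rightarrow> bool" where
  "testfn h \<longleftrightarrow> (\<exists>Dh. (\<forall>x. (h has_derivative Dh x) (at x)) \<and> (\<forall>v. continuous_on UNIV (\<lambda>x. Dh x v)))
     \<and> (\<exists>S. compact S \<and> (\<forall>x. x \<notin> S \<longrightarrow> h x = 0)) \<and> (\<forall>x. \<bar>h x\<bar> \<le> 1)"

lemma test_field:
  fixes h :: "'a::euclidean_space \<Rightarrow> real"
  assumes h: "testfn h" and z: "z \<noteq> 0"
  shows "\<exists>G. C1_field G \<and> compact (closure {x. G x \<noteq> 0}) \<and> (\<forall>x. norm (G x) \<le> 1)
            \<and> (\<forall>x. divergence G x = (h x - h (x - z)) / norm z)"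
proof -
  obtain Dh where Dh: "\<And>x. (h has_derivative Dh x) (at x)" "\<And>v. continuous_on UNIV (\<lambda>x. Dh x v)"
    using h unfolding testfn_def by blast
  obtain S where S: "compact S" "\<And>x. x \<notin> S \<Longrightarrow> h x = 0"
    using h unfolding testfn_def by blast
  have hb: "\<And>x. \<bar>h x\<bar> \<le> 1" using h unfolding testfn_def by blast
  have bl: "bounded_linear (Dh x)" for x using Dh(1) has_derivative_bounded_linear by blast
  have hc: "continuous_on UNIV h"
    using Dh(1) by (meson continuous_at_imp_continuous_on differentiableI differentiable_imp_continuous_within)
  define B where "B x = Blinfun (Dh x)" for x
  have B: "blinfun_apply (B x) = Dh x" for x unfolding B_def using bounded_linear_Blinfun_apply[OF bl] .
  have Bc: "continuous_on UNIV B"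
    by (rule continuous_on_blinfun_componentwise) (simp add: B Dh(2))
  define H where "H x = integral (cbox 0 1) (\<lambda>t::real. h (x - t *\<^sub>R z))" for x
  define DH where "DH x = integral (cbox 0 1) (\<lambda>t::real. B (x - t *\<^sub>R z))" for x
  have contB: "continuous_on (UNIV \<times> cbox 0 1) (\<lambda>(x, t::real). B (x - t *\<^sub>R z))"
  proof -
    have "continuous_on (UNIV \<times> cbox 0 1) (\<lambda>p::'a\<times>real. fst p - snd p *\<^sub>R z)"
      by (intro continuous_intros)
    from continuous_on_compose2[OF Bc this] show ?thesis by (simp add: case_prod_beta)
  qed
  have hcomp: "((\<lambda>x. h (x - t *\<^sub>R z)) has_derivative blinfun_apply (B (x - t *\<^sub>R z))) (at x within UNIV)" for x t
  proof -
    have lin: "((\<lambda>x. x - t *\<^sub>R z) has_derivative (\<lambda>v. v)) (at x)"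
      by (auto intro!: derivative_eq_intros)
    from has_derivative_compose[OF lin Dh(1)] show ?thesis by (simp add: B)
  qed
  have hint: "(\<lambda>t. h (x - t *\<^sub>R z)) integrable_on cbox 0 1" for x
    by (rule integrable_continuous, rule continuous_on_compose2[OF hc]) (auto intro!: continuous_intros)
  have Hd: "(H has_derivative blinfun_apply (DH x)) (at x)" for x
    using leibniz_rule[of UNIV 0 1 "\<lambda>x t. h (x - t *\<^sub>R z)" "\<lambda>x t. B (x - t *\<^sub>R z)" x, OF hcomp hint contB]
    by (simp add: H_def[abs_def] DH_def)
  have DHc: "continuous_on UNIV DH"
    unfolding DH_def[abs_def] by (rule integral_continuous_on_param[OF contB])
  have Bint: "(\<lambda>t. B (x - t *\<^sub>R z)) integrable_on cbox 0 1" for x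
    by (rule integrable_continuous, rule continuous_on_compose2[OF Bc]) (auto intro!: continuous_intros)
  have DHapp: "blinfun_apply (DH x) v = integral (cbox 0 1) (\<lambda>t::real. Dh (x - t *\<^sub>R z) v)" for x v
  proof -
    have "bounded_linear (\<lambda>b. blinfun_apply b v)" by (rule bounded_linear_intros)+
    from integral_linear[OF Bint this] show ?thesis by (simp add: DH_def o_def B)
  qed
  have DHz: "blinfun_apply (DH x) z = h x - h (x - z)" for x
  proof -
    have "((\<lambda>t. Dh (x - t *\<^sub>R z) z) has_integral (h x - h (x - z))) {0..1}"
    proof -
      have "((\<lambda>t. - Dh (x - t *\<^sub>R z) z) has_integral (h (x - 1 *\<^sub>R z) - h (x - 0 *\<^sub>R z))) {0..1}"
      proof (rule fundamental_theorem_of_calculus)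
        fix t :: real
        have lin: "((\<lambda>t. x - t *\<^sub>R z) has_derivative (\<lambda>s. - (s *\<^sub>R z))) (at t within {0..1})"
          by (auto intro!: derivative_eq_intros)
        have "((\<lambda>t. h (x - t *\<^sub>R z)) has_derivative (\<lambda>s. Dh (x - t *\<^sub>R z) (- (s *\<^sub>R z)))) (at t within {0..1})"
          using has_derivative_compose[OF lin Dh(1)] .
        moreover have "(\<lambda>s. Dh (x - t *\<^sub>R z) (- (s *\<^sub>R z))) = (\<lambda>s. s *\<^sub>R (- Dh (x - t *\<^sub>R z) z))"
          using bl[of "x - t *\<^sub>R z"] by (simp add: linear_simps)
        ultimately show "((\<lambda>t. h (x - t *\<^sub>R z)) has_vector_derivative - Dh (x - t *\<^sub>R z) z) (at t within {0..1})"
          by (simp add: has_vector_derivative_def)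
      qed simp
      from has_integral_neg[OF this] show ?thesis by simp
    qed
    then show ?thesis by (simp add: DHapp integral_unique)
  qed
  define G where "G x = (H x / norm z) *\<^sub>R z" for x
  define DG where "DG x = Blinfun (\<lambda>v. (blinfun_apply (DH x) v / norm z) *\<^sub>R z)" for x
  have blDG: "bounded_linear (\<lambda>v. (blinfun_apply (DH x) v / norm z) *\<^sub>R z)" for x
  proof -
    have "bounded_linear (\<lambda>v. blinfun_apply (DH x) v / norm z)"
      by (rule bounded_linear_compose[OF bounded_linear_divide blinfun.bounded_linear_right])
    from bounded_linear_compose[OF bounded_linear_scaleR_left this] show ?thesis .
  qed
  have DGa: "blinfun_apply (DG x) = (\<lambda>v. (blinfun_apply (DH x) v / norm z) *\<^sub>R z)" for x
    unfolding DG_def using bounded_linear_Blinfun_apply[OF blDG] .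
  have Gd: "(G has_derivative blinfun_apply (DG x)) (at x)" for x
    unfolding DGa G_def[abs_def] using Hd[of x] z by (auto intro!: derivative_eq_intros)
  have DGc: "continuous_on UNIV DG"
    by (rule continuous_on_blinfun_componentwise) (use z in \<open>auto simp: DGa intro!: continuous_intros DHc\<close>)
  have C1: "C1_field G" unfolding C1_field_def using Gd DGc by blast
  have div: "divergence G x = (h x - h (x - z)) / norm z" for x
  proof -
    have fd: "frechet_derivative G (at x) = blinfun_apply (DG x)" using frechet_derivative_at[OF Gd] by simp
    have "divergence G x = (\<Sum>i\<in>Basis. (blinfun_apply (DH x) i / norm z) * (z \<bullet> i))"
      unfolding divergence_def fd DGa by (simp add: mult.commute)
    also have "\<dots> = blinfun_apply (DH x) (\<Sum>i\<in>Basis. (z \<bullet> i) *\<^sub>R i) / norm z"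
      by (simp add: blinfun.sum_right blinfun.scaleR_right sum_divide_distrib mult.commute)
    also have "\<dots> = (h x - h (x - z)) / norm z" by (simp add: euclidean_representation DHz)
    finally show ?thesis .
  qed
  have Hb: "\<bar>H x\<bar> \<le> 1" for x
  proof -
    have "norm (H x) \<le> 1 * Henstock_Kurzweil_Integration.content (cbox (0::real) 1)"
      unfolding H_def
      by (rule has_integral_bound[OF _ integrable_integral[OF hint]]) (use hb in auto)
    then show ?thesis by simp
  qed
  have Gb: "norm (G x) \<le> 1" for x using Hb[of x] z by (simp add: G_def)
  define T where "T = (\<lambda>p. fst p + snd p *\<^sub>R z) ` (S \<times> {0::real..1})"
  have cT: "compact T" unfolding T_def
    by (intro compact_continuous_image compact_Times S(1) compact_Icc) (auto intro!: continuous_intros)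
  have "{x. G x \<noteq> 0} \<subseteq> T"
  proof
    fix x assume "x \<in> {x. G x \<noteq> 0}"
    then have "H x \<noteq> 0" by (auto simp: G_def)
    then have "\<exists>t\<in>cbox 0 1. h (x - t *\<^sub>R z) \<noteq> 0"
      unfolding H_def using integral_0 integral_cong by (metis (no_types, lifting))
    then obtain t where t: "t \<in> {0..1}" "x - t *\<^sub>R z \<in> S" using S(2) by fastforce
    have "x = fst (x - t *\<^sub>R z, t) + snd (x - t *\<^sub>R z, t) *\<^sub>R z" by simp
    then show "x \<in> T" unfolding T_def using t by blast
  qed
  then have "compact (closure {x. G x \<noteq> 0})"
    using cT compact_imp_bounded bounded_subset compact_closure by metis
  then show ?thesis using C1 Gb div by blast
qed

lemma mder: "((\<lambda>s::real. (max 0 s)\<^sup>2) has_real_derivative (2 * max 0 s)) (at s)"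
proof (cases "s > 0")
  case True
  have "((\<lambda>s::real. s\<^sup>2) has_real_derivative (2 * s)) (at s)"
    by (auto intro!: derivative_eq_intros)
  then have "((\<lambda>s::real. (max 0 s)\<^sup>2) has_real_derivative (2 * s)) (at s)"
    by (rule has_field_derivative_transform_within_open[of _ _ _ "{0<..}"]) (use True in auto)
  then show ?thesis using True by simp
next
  case False
  show ?thesis
  proof (cases "s < 0")
    case True
    have "((\<lambda>s::real. 0) has_real_derivative 0) (at s)" by (rule DERIV_const)
    then have "((\<lambda>s::real. (max 0 s)\<^sup>2) has_real_derivative 0) (at s)"
      by (rule has_field_derivative_transform_within_open[of _ _ _ "{..<0}"]) (use True in auto)
    then show ?thesis using True by simp
  next
    case False
    with \<open>\<not> s > 0\<close> have s0: "s = 0" by simp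
    have "((\<lambda>y. ((max 0 y)\<^sup>2 - (max 0 0)\<^sup>2) / (y - 0)) \<longlongrightarrow> (0::real)) (at 0)"
    proof (rule Lim_null_comparison)
      show "\<forall>\<^sub>F y in at 0. norm (((max 0 y)\<^sup>2 - (max 0 0)\<^sup>2) / (y - 0)) \<le> \<bar>y\<bar>"
      proof (rule always_eventually, rule allI)
        fix y :: real
        show "norm (((max 0 y)\<^sup>2 - (max 0 0)\<^sup>2) / (y - 0)) \<le> \<bar>y\<bar>"
          by (cases "y > 0") (auto simp: power2_eq_square abs_mult)
      qed
      show "((\<lambda>y::real. \<bar>y\<bar>) \<longlongrightarrow> 0) (at 0)"
        using tendsto_rabs[OF tendsto_ident_at[of "0::real" UNIV]] by simp
    qed
    then show ?thesis using s0 by (simp add: has_field_derivative_iff)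
  qed
qed

lemma poly_C1:
  fixes p :: "'a::euclidean_space \<Rightarrow> real"
  assumes "real_polynomial_function p"
  shows "\<exists>Dp. (\<forall>x. (p has_derivative Dp x) (at x)) \<and> (\<forall>v. continuous_on UNIV (\<lambda>x. Dp x v))"
  using assms
proof (induction p rule: real_polynomial_function.induct)
  case (linear f)
  show ?case
    by (rule exI[of _ "\<lambda>x. f"]) (auto intro: bounded_linear_imp_has_derivative linear)
next
  case (const c)
  show ?case by (rule exI[of _ "\<lambda>x v. 0"]) auto
next
  case (add f g)
  then obtain Df Dg where Df: "\<And>x. (f has_derivative Df x) (at x)" "\<And>v. continuous_on UNIV (\<lambda>x. Df x v)"
    and Dg: "\<And>x. (g has_derivative Dg x) (at x)" "\<And>v. continuous_on UNIV (\<lambda>x. Dg x v)" by blast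
  show ?case
    by (rule exI[of _ "\<lambda>x v. Df x v + Dg x v"]) (auto intro!: has_derivative_add Df Dg continuous_intros)
next
  case (mult f g)
  then obtain Df Dg where Df: "\<And>x. (f has_derivative Df x) (at x)" "\<And>v. continuous_on UNIV (\<lambda>x. Df x v)"
    and Dg: "\<And>x. (g has_derivative Dg x) (at x)" "\<And>v. continuous_on UNIV (\<lambda>x. Dg x v)" by blast
  have fc: "continuous_on UNIV f"
    by (rule continuous_at_imp_continuous_on) (use continuous_real_polymonial_function[OF mult.hyps(1)] in blast)
  have gc: "continuous_on UNIV g"
    by (rule continuous_at_imp_continuous_on) (use continuous_real_polymonial_function[OF mult.hyps(2)] in blast)
  have 1: "\<forall>x. ((\<lambda>x. f x * g x) has_derivative (\<lambda>v. f x * Dg x v + Df x v * g x)) (at x)"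
    using has_derivative_mult[OF Df(1) Dg(1)] by blast
  have 2: "\<forall>v. continuous_on UNIV (\<lambda>x. f x * Dg x v + Df x v * g x)"
    by (intro allI continuous_on_add continuous_on_mult fc gc Df(2) Dg(2))
  show ?case by (rule exI[of _ "\<lambda>x v. f x * Dg x v + Df x v * g x"]) (use 1 2 in simp)
qed

definition chi :: "real \<Rightarrow> 'a::euclidean_space \<Rightarrow> real" where
  "chi R x = (max 0 (1 - (x \<bullet> x) / R\<^sup>2))\<^sup>2"

lemma chi_C1:
  assumes R: "R > 0"
  shows "\<exists>D. (\<forall>x. ((chi R :: 'a::euclidean_space \<Rightarrow> real) has_derivative D x) (at x)) \<and> (\<forall>v. continuous_on UNIV (\<lambda>x. D x v))"
proof -
  define m' where "m' s = 2 * max 0 (s::real)" for s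
  have md: "((\<lambda>s::real. (max 0 s)\<^sup>2) has_derivative (*) (m' s)) (at s)" for s
    using mder[of s] unfolding m'_def has_field_derivative_def .
  have id0: "((\<lambda>x::'a. 1 - inverse (R\<^sup>2) * (x \<bullet> x)) has_derivative (\<lambda>v. - (inverse (R\<^sup>2) * (v \<bullet> x + x \<bullet> v)))) (at x)" for x
    by (auto intro!: derivative_eq_intros)
  have id: "((\<lambda>x::'a. 1 - (x \<bullet> x) / R\<^sup>2) has_derivative (\<lambda>v. - (2 * (x \<bullet> v)) / R\<^sup>2)) (at x)" for x
    using id0[of x] by (simp add: divide_inverse inner_commute mult.commute)
  have "((chi R :: 'a \<Rightarrow> real) has_derivative (\<lambda>v. m' (1 - (x \<bullet> x) / R\<^sup>2) * (- (2 * (x \<bullet> v)) / R\<^sup>2))) (at x)" for x :: 'a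
    unfolding chi_def[abs_def] using has_derivative_compose[OF id md] .
  moreover have "continuous_on UNIV (\<lambda>x::'a. m' (1 - (x \<bullet> x) / R\<^sup>2) * (- (2 * (x \<bullet> v)) / R\<^sup>2))" for v
    unfolding m'_def using R by (intro continuous_intros) auto
  ultimately show ?thesis
    by (intro exI[of _ "\<lambda>x v. m' (1 - (x \<bullet> x) / R\<^sup>2) * (- (2 * (x \<bullet> v)) / R\<^sup>2)"]) simp
qed

lemma chi_props:
  fixes x :: "'a::euclidean_space"
  assumes "R > 0"
  shows "0 \<le> chi R x" "chi R x \<le> 1" "norm x > R \<Longrightarrow> chi R x = 0"
proof -
  show "0 \<le> chi R x" by (simp add: chi_def)
  have "0 \<le> (x \<bullet> x) / R\<^sup>2" by simp
  then have "max 0 (1 - (x \<bullet> x) / R\<^sup>2) \<le> 1" by simp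
  then show "chi R x \<le> 1" unfolding chi_def by (simp add: power_le_one)
  assume "norm x > R"
  then have "R\<^sup>2 < (norm x)\<^sup>2" using assms by (simp add: power_strict_mono)
  then have "R\<^sup>2 < x \<bullet> x" by (simp add: power2_norm_eq_inner)
  then have "1 \<le> (x \<bullet> x) / R\<^sup>2" using assms by (simp add: field_simps)
  then show "chi R x = 0" by (simp add: chi_def)
qed

lemma chi_lim:
  fixes x :: "'a::euclidean_space"
  shows "(\<lambda>n. chi (real (Suc n)) x) \<longlonglongrightarrow> 1"
proof -
  have "(\<lambda>n. inverse (real (Suc n))) \<longlonglongrightarrow> 0" by (rule LIMSEQ_inverse_real_of_nat)
  then have "(\<lambda>n. (inverse (real (Suc n)))\<^sup>2) \<longlonglongrightarrow> 0\<^sup>2" by (intro tendsto_power)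
  then have i: "(\<lambda>n. inverse ((real (Suc n))\<^sup>2)) \<longlonglongrightarrow> 0" unfolding power_inverse by simp
  have c: "isCont (\<lambda>t. (max 0 (1 - (x \<bullet> x) * t))\<^sup>2) 0" by (intro continuous_intros)
  from isCont_tendsto_compose[OF c i]
  have "(\<lambda>n. (max 0 (1 - (x \<bullet> x) * inverse ((real (Suc n))\<^sup>2)))\<^sup>2) \<longlonglongrightarrow> 1" by simp
  then show ?thesis unfolding chi_def divide_inverse .
qed

lemma int_mult_bdd:
  fixes f g :: "'a::euclidean_space \<Rightarrow> real"
  assumes f: "integrable lborel f" and g: "continuous_on UNIV g" and B: "\<And>x. \<bar>g x\<bar> \<le> B"
  shows "integrable lborel (\<lambda>x. f x * g x)"
proof -
  have i: "integrable lborel (\<lambda>x. B * f x)" using f by simp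
  have "g \<in> borel_measurable borel" using g by (rule borel_measurable_continuous_onI)
  then have m: "(\<lambda>x. f x * g x) \<in> borel_measurable lborel"
    using borel_measurable_integrable[OF f] by measurable
  have nb: "norm (f x * g x) \<le> norm (B * f x)" for x
  proof -
    have "\<bar>f x\<bar> * \<bar>g x\<bar> \<le> \<bar>f x\<bar> * B" using B[of x] by (intro mult_left_mono) auto
    moreover have "B \<le> \<bar>B\<bar>" by simp
    then have "\<bar>f x\<bar> * B \<le> \<bar>f x\<bar> * \<bar>B\<bar>" by (intro mult_left_mono) auto
    ultimately show ?thesis by (simp add: abs_mult mult.commute)
  qed
  show ?thesis by (rule Bochner_Integration.integrable_bound[OF i m]) (rule AE_I2, rule nb)
qed

lemma step1:
  fixes f :: "'a::euclidean_space \<Rightarrow> real"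
  assumes f: "integrable lborel f" and e: "e > 0"
  shows "\<exists>u. continuous_on UNIV u \<and> (\<forall>x. \<bar>u x\<bar> \<le> 1) \<and> (\<integral>x. \<bar>f x\<bar> \<partial>lborel) - e < (\<integral>x. f x * u x \<partial>lborel)"
proof -
  have fm[measurable]: "f \<in> borel_measurable borel" using borel_measurable_integrable[OF f] by simp
  have "(\<lambda>x. sgn (f x)) \<in> borel_measurable lborel" by measurable
  then have "(\<lambda>x. sgn (f x)) \<in> borel_measurable lebesgue" by (rule measurable_completion)
  then have "(\<lambda>x. sgn (f x)) \<in> borel_measurable (lebesgue_on UNIV)" by (rule measurable_restrict_space1)
  then have "(\<lambda>x. sgn (f x)) measurable_on UNIV" by (subst measurable_on_iff_borel_measurable) auto
  then obtain N g where N: "negligible N" and gc: "\<And>n. continuous_on UNIV (g n)"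
    and gl: "\<And>x. x \<notin> N \<Longrightarrow> (\<lambda>n. g n x) \<longlonglongrightarrow> sgn (f x)"
    unfolding measurable_on_def by auto
  define u where "u n x = max (-1) (min 1 (g n x))" for n x
  have uc: "continuous_on UNIV (u n)" for n unfolding u_def by (intro continuous_intros gc)
  have ub: "\<bar>u n x\<bar> \<le> 1" for n x unfolding u_def by auto
  have "AE x in lebesgue. x \<notin> N" using N by (intro AE_not_in) (simp add: negligible_iff_null_sets)
  then have AEN: "AE x in lborel. x \<notin> N" by (simp add: AE_completion_iff)
  have lim: "AE x in lborel. (\<lambda>n. f x * u n x) \<longlonglongrightarrow> \<bar>f x\<bar>"
    using AEN
  proof eventually_elim
    case (elim x)
    have "(\<lambda>n. u n x) \<longlonglongrightarrow> max (-1) (min 1 (sgn (f x)))"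
      unfolding u_def by (intro tendsto_max tendsto_min tendsto_const gl elim)
    moreover have "max (-1) (min 1 (sgn (f x))) = sgn (f x)" by (simp add: sgn_real_def)
    ultimately have "(\<lambda>n. f x * u n x) \<longlonglongrightarrow> f x * sgn (f x)" by (intro tendsto_mult tendsto_const) auto
    moreover have "f x * sgn (f x) = \<bar>f x\<bar>" by (simp add: sgn_real_def)
    ultimately show ?case by simp
  qed
  have um: "u n \<in> borel_measurable borel" for n by (rule borel_measurable_continuous_onI[OF uc])
  have "(\<lambda>n. \<integral>x. f x * u n x \<partial>lborel) \<longlonglongrightarrow> (\<integral>x. \<bar>f x\<bar> \<partial>lborel)"
  proof (rule integral_dominated_convergence[where w = "\<lambda>x. \<bar>f x\<bar>"])
    show "(\<lambda>x. \<bar>f x\<bar>) \<in> borel_measurable lborel" by measurable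
    show "(\<lambda>x. f x * u n x) \<in> borel_measurable lborel" for n using um[of n] by measurable
    show "integrable lborel (\<lambda>x. \<bar>f x\<bar>)" using f by simp
    show "AE x in lborel. (\<lambda>n. f x * u n x) \<longlonglongrightarrow> \<bar>f x\<bar>" by (rule lim)
    show "AE x in lborel. norm (f x * u n x) \<le> \<bar>f x\<bar>" for n
      using ub[of n] by (intro AE_I2) (simp add: abs_mult mult_left_le)
  qed
  then have "\<forall>\<^sub>F n in sequentially. (\<integral>x. \<bar>f x\<bar> \<partial>lborel) - e < (\<integral>x. f x * u n x \<partial>lborel)"
    by (rule order_tendstoD) (use e in simp)
  then obtain n where "(\<integral>x. \<bar>f x\<bar> \<partial>lborel) - e < (\<integral>x. f x * u n x \<partial>lborel)"
    by (auto simp: eventually_sequentially)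
  then show ?thesis using uc ub by blast
qed

lemma chi_cont: "continuous_on UNIV (chi R :: 'a::euclidean_space \<Rightarrow> real)" if "R > 0"
  using that unfolding chi_def[abs_def] by (intro continuous_intros) auto

lemma density:
  fixes f :: "'a::euclidean_space \<Rightarrow> real"
  assumes f: "integrable lborel f" and e: "e > 0"
  shows "\<exists>h. testfn h \<and> continuous_on UNIV h \<and> (3/5) * (\<integral>x. \<bar>f x\<bar> \<partial>lborel) - e \<le> (\<integral>x. f x * h x \<partial>lborel)"
proof -
  have fm[measurable]: "f \<in> borel_measurable borel" using borel_measurable_integrable[OF f] by simp
  obtain u where uc: "continuous_on UNIV u" and ub: "\<And>x. \<bar>u x\<bar> \<le> 1"
    and u1: "(\<integral>x. \<bar>f x\<bar> \<partial>lborel) - e/4 < (\<integral>x. f x * u x \<partial>lborel)"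
    using step1[OF f, of "e/4"] e by auto
  have um[measurable]: "u \<in> borel_measurable borel" by (rule borel_measurable_continuous_onI[OF uc])
  have chim[measurable]: "chi (real (Suc k)) \<in> borel_measurable borel" for k
    by (rule borel_measurable_continuous_onI[OF chi_cont]) simp
  have "(\<lambda>k. \<integral>x. f x * u x * chi (real (Suc k)) x \<partial>lborel) \<longlonglongrightarrow> (\<integral>x. f x * u x \<partial>lborel)"
  proof (rule integral_dominated_convergence[where w = "\<lambda>x. \<bar>f x\<bar>"])
    show "(\<lambda>x. f x * u x) \<in> borel_measurable lborel" by measurable
    show "(\<lambda>x. f x * u x * chi (real (Suc k)) x) \<in> borel_measurable lborel" for k by measurable
    show "integrable lborel (\<lambda>x. \<bar>f x\<bar>)" using f by simp
    show "AE x in lborel. (\<lambda>k. f x * u x * chi (real (Suc k)) x) \<longlonglongrightarrow> f x * u x"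
    proof (rule AE_I2)
      fix x
      have "(\<lambda>k. f x * u x * chi (real (Suc k)) x) \<longlonglongrightarrow> f x * u x * 1"
        by (intro tendsto_mult tendsto_const chi_lim)
      then show "(\<lambda>k. f x * u x * chi (real (Suc k)) x) \<longlonglongrightarrow> f x * u x" by simp
    qed
    show "AE x in lborel. norm (f x * u x * chi (real (Suc k)) x) \<le> \<bar>f x\<bar>" for k
    proof (rule AE_I2)
      fix x
      have "\<bar>u x * chi (real (Suc k)) x\<bar> \<le> 1"
        using ub[of x] chi_props[of "real (Suc k)" x] by (simp add: abs_mult mult_le_one)
      then show "norm (f x * u x * chi (real (Suc k)) x) \<le> \<bar>f x\<bar>"
        by (simp add: abs_mult mult_left_le mult.assoc)
    qed
  qed
  then have "\<forall>\<^sub>F k in sequentially. (\<integral>x. f x * u x \<partial>lborel) - e/4 < (\<integral>x. f x * u x * chi (real (Suc k)) x \<partial>lborel)"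
    by (rule order_tendstoD) (use e in simp)
  then obtain k where k: "(\<integral>x. f x * u x \<partial>lborel) - e/4 < (\<integral>x. f x * u x * chi (real (Suc k)) x \<partial>lborel)"
    by (auto simp: eventually_sequentially)
  define R where "R = real (Suc k)"
  have R0: "R > 0" by (simp add: R_def)
  obtain p where p: "real_polynomial_function p" and pu: "\<And>x. x \<in> cball 0 R \<Longrightarrow> \<bar>u x - p x\<bar> < 1/4"
    using Stone_Weierstrass_real_polynomial_function[of "cball 0 R" u "1/4"] uc
    by (auto intro: continuous_on_subset)
  have pc: "continuous_on UNIV p"
    by (rule continuous_at_imp_continuous_on) (use continuous_real_polymonial_function[OF p] in blast)
  have cc: "continuous_on UNIV (chi R :: 'a \<Rightarrow> real)" by (rule chi_cont[OF R0])
  define h where "h x = 4/5 * (chi R x * p x)" for x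
  have hc: "continuous_on UNIV h" unfolding h_def by (intro continuous_intros cc pc)
  have small: "\<bar>chi R x * (p x - u x)\<bar> \<le> 1/4" for x
  proof (cases "x \<in> cball 0 R")
    case True
    have "\<bar>chi R x * (p x - u x)\<bar> = chi R x * \<bar>p x - u x\<bar>" using chi_props(1)[OF R0, of x] by (simp add: abs_mult)
    also have "\<dots> \<le> 1 * (1/4)" using chi_props(1,2)[OF R0, of x] pu[OF True]
      by (intro mult_mono) (auto simp: abs_minus_commute)
    finally show ?thesis by simp
  next
    case False then show ?thesis using chi_props(3)[OF R0, of x] by simp
  qed
  have hb: "\<bar>h x\<bar> \<le> 1" for x
  proof (cases "x \<in> cball 0 R")
    case True
    have "\<bar>p x\<bar> \<le> 5/4" using pu[OF True] ub[of x] by linarith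
    moreover have "\<bar>chi R x\<bar> \<le> 1" using chi_props(1,2)[OF R0, of x] by simp
    ultimately have "\<bar>chi R x\<bar> * \<bar>p x\<bar> \<le> 1 * (5/4)"
      by (intro mult_mono) auto
    then have "\<bar>chi R x * p x\<bar> \<le> 1 * (5/4)" by (simp add: abs_mult)
    then show ?thesis by (simp add: h_def abs_mult)
  next
    case False then show ?thesis using chi_props(3)[OF R0, of x] by (simp add: h_def)
  qed
  have test: "testfn h"
  proof -
    obtain Dc where Dc: "\<And>x::'a. (chi R has_derivative Dc x) (at x)" "\<And>v. continuous_on UNIV (\<lambda>x. Dc x v)"
      using chi_C1[OF R0] by blast
    obtain Dp where Dp: "\<And>x. (p has_derivative Dp x) (at x)" "\<And>v. continuous_on UNIV (\<lambda>x. Dp x v)"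
      using poly_C1[OF p] by blast
    have d: "\<forall>x. (h has_derivative (\<lambda>v. 4/5 * (chi R x * Dp x v + Dc x v * p x))) (at x)"
      unfolding h_def[abs_def] using has_derivative_mult_right[OF has_derivative_mult[OF Dc(1) Dp(1)]] by blast
    have c: "\<forall>v. continuous_on UNIV (\<lambda>x. 4/5 * (chi R x * Dp x v + Dc x v * p x))"
      by (intro allI continuous_intros cc pc Dc(2) Dp(2))
    have s: "\<forall>x. x \<notin> cball 0 R \<longrightarrow> h x = 0"
    proof (intro allI impI)
      fix x :: 'a assume "x \<notin> cball 0 R"
      then have "norm x > R" by simp
      then show "h x = 0" using chi_props(3)[OF R0, of x] by (simp add: h_def)
    qed
    show ?thesis unfolding testfn_def
      by (intro conjI exI[of _ "\<lambda>x v. 4/5 * (chi R x * Dp x v + Dc x v * p x)"] exI[of _ "cball 0 R"])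
         (use d c s hb in auto)
  qed
  have uchi: "\<bar>u x * chi R x\<bar> \<le> 1" for x
    using ub[of x] chi_props(1,2)[OF R0, of x] by (simp add: abs_mult mult_le_one)
  have i1: "integrable lborel (\<lambda>x. f x * (u x * chi R x))"
    by (rule int_mult_bdd[OF f, of _ 1]) (use uc cc uchi in \<open>auto intro!: continuous_intros\<close>)
  have i2: "integrable lborel (\<lambda>x. f x * (chi R x * (p x - u x)))"
    by (rule int_mult_bdd[OF f, of _ "1/4"]) (use uc cc pc small in \<open>auto intro!: continuous_intros\<close>)
  have eq: "(\<integral>x. f x * h x \<partial>lborel) = 4/5 * ((\<integral>x. f x * (u x * chi R x) \<partial>lborel) + (\<integral>x. f x * (chi R x * (p x - u x)) \<partial>lborel))"
  proof -
    have "(\<integral>x. f x * h x \<partial>lborel) = (\<integral>x. 4/5 * (f x * (u x * chi R x) + f x * (chi R x * (p x - u x))) \<partial>lborel)"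
      by (intro Bochner_Integration.integral_cong) (auto simp: h_def algebra_simps)
    also have "\<dots> = 4/5 * (\<integral>x. f x * (u x * chi R x) + f x * (chi R x * (p x - u x)) \<partial>lborel)"
      by (rule Bochner_Integration.integral_mult_right) (use i1 i2 in simp)
    also have "\<dots> = 4/5 * ((\<integral>x. f x * (u x * chi R x) \<partial>lborel) + (\<integral>x. f x * (chi R x * (p x - u x)) \<partial>lborel))"
      using i1 i2 by simp
    finally show ?thesis .
  qed
  have lo: "- (1/4) * (\<integral>x. \<bar>f x\<bar> \<partial>lborel) \<le> (\<integral>x. f x * (chi R x * (p x - u x)) \<partial>lborel)"
  proof -
    have "(\<integral>x. - (1/4) * \<bar>f x\<bar> \<partial>lborel) \<le> (\<integral>x. f x * (chi R x * (p x - u x)) \<partial>lborel)"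
    proof (rule Bochner_Integration.integral_mono)
      show "integrable lborel (\<lambda>x. - (1/4) * \<bar>f x\<bar>)" using f by simp
      show "integrable lborel (\<lambda>x. f x * (chi R x * (p x - u x)))" by (rule i2)
      fix x
      have "\<bar>f x * (chi R x * (p x - u x))\<bar> \<le> \<bar>f x\<bar> * (1/4)"
        unfolding abs_mult[of "f x"] by (intro mult_left_mono small) auto
      then show "- (1/4) * \<bar>f x\<bar> \<le> f x * (chi R x * (p x - u x))" by linarith
    qed
    then show ?thesis by simp
  qed
  have k': "(\<integral>x. f x * u x * chi R x \<partial>lborel) = (\<integral>x. f x * (u x * chi R x) \<partial>lborel)"
    by (simp add: mult.assoc)
  have "(3/5) * (\<integral>x. \<bar>f x\<bar> \<partial>lborel) - e \<le> (\<integral>x. f x * h x \<partial>lborel)"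
    unfolding eq distrib_left using k[folded R_def, unfolded k'] u1 lo e by linarith
  then show ?thesis using test hc by blast
qed

lemma testfn_neg: "testfn h \<Longrightarrow> testfn (\<lambda>x. - h x)"
proof -
  assume h: "testfn h"
  obtain Dh where Dh: "\<And>x. (h has_derivative Dh x) (at x)" "\<And>v. continuous_on UNIV (\<lambda>x. Dh x v)"
    using h unfolding testfn_def by blast
  obtain S where S: "compact S" "\<And>x. x \<notin> S \<Longrightarrow> h x = 0"
    using h unfolding testfn_def by blast
  have hb: "\<And>x. \<bar>h x\<bar> \<le> 1" using h unfolding testfn_def by blast
  have d: "\<forall>x. ((\<lambda>x. - h x) has_derivative (\<lambda>v. - Dh x v)) (at x)" using has_derivative_minus[OF Dh(1)] by blast
  have c: "\<forall>v. continuous_on UNIV (\<lambda>x. - Dh x v)" by (intro allI continuous_intros Dh(2))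
  show ?thesis unfolding testfn_def
    by (intro conjI exI[of _ "\<lambda>x v. - Dh x v"] exI[of _ S]) (use d c S hb in auto)
qed

lemma testfn_cont: "testfn h \<Longrightarrow> continuous_on UNIV h"
  unfolding testfn_def
  by (meson continuous_at_imp_continuous_on differentiableI differentiable_imp_continuous_within)

lemma testfn_bound: "testfn h \<Longrightarrow> \<bar>h x\<bar> \<le> 1"
  unfolding testfn_def by blast

lemma bv_translate:
  fixes \<psi> :: "'a::euclidean_space \<Rightarrow> real"
  assumes "bounded_variation \<psi>"
  shows "\<exists>C\<ge>0. \<forall>z. (\<integral>\<^sup>+x. ennreal \<bar>\<psi> (x + z) - \<psi> x\<bar> \<partial>lborel) \<le> ennreal (C * norm z)"
proof -
  have psi: "integrable lborel \<psi>" using assms by (simp add: bounded_variation_def)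
  have psim[measurable]: "\<psi> \<in> borel_measurable borel" using borel_measurable_integrable[OF psi] by simp
  obtain V where V: "\<And>g. C1_field g \<and> compact (closure {x. g x \<noteq> 0}) \<and> (\<forall>x. norm (g x) \<le> 1)
            \<Longrightarrow> (\<integral>x. \<psi> x * divergence g x \<partial>lborel) \<le> V"
    using assms unfolding bounded_variation_def by blast
  define V0 where "V0 = max V 0"
  have V0: "0 \<le> V0" "V \<le> V0" by (auto simp: V0_def)
  have main: "(\<integral>\<^sup>+x. ennreal \<bar>\<psi> (x + z) - \<psi> x\<bar> \<partial>lborel) \<le> ennreal (5/3 * V0 * norm z)" for z
  proof (cases "z = 0")
    case True then show ?thesis by simp
  next
    case z: False
    define f where "f x = \<psi> (x + z) - \<psi> x" for x
    have psiz: "integrable lborel (\<lambda>x. \<psi> (x + z))" by (rule integrable_lborel_translate[OF psi])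
    have fi: "integrable lborel f" unfolding f_def using psiz psi by simp
    have key: "3/5 * (\<integral>x. \<bar>f x\<bar> \<partial>lborel) \<le> V0 * norm z + e" if e: "e > 0" for e
    proof -
      obtain h where h: "testfn h" and hc: "continuous_on UNIV h"
        and hd: "(3/5) * (\<integral>x. \<bar>f x\<bar> \<partial>lborel) - e \<le> (\<integral>x. f x * h x \<partial>lborel)"
        using density[OF fi e] by blast
      have hb: "\<bar>h x\<bar> \<le> 1" for x using testfn_bound[OF h] .
      have hzc: "continuous_on UNIV (\<lambda>x. h (x - z))"
        by (rule continuous_on_compose2[OF hc]) (auto intro!: continuous_intros)
      have hm[measurable]: "h \<in> borel_measurable borel" by (rule borel_measurable_continuous_onI[OF hc])
      have i1: "integrable lborel (\<lambda>x. \<psi> (x + z) * h x)" by (rule int_mult_bdd[OF psiz hc hb])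
      have i2: "integrable lborel (\<lambda>x. \<psi> x * h x)" by (rule int_mult_bdd[OF psi hc hb])
      have i3: "integrable lborel (\<lambda>x. \<psi> x * h (x - z))" by (rule int_mult_bdd[OF psi hzc hb])
      have tr: "(\<integral>x. \<psi> (x + z) * h x \<partial>lborel) = (\<integral>x. \<psi> x * h (x - z) \<partial>lborel)"
        using integral_lborel_translate[of "\<lambda>y. \<psi> y * h (y - z)" z] by simp
      have fh: "(\<integral>x. f x * h x \<partial>lborel) = (\<integral>x. \<psi> x * h (x - z) \<partial>lborel) - (\<integral>x. \<psi> x * h x \<partial>lborel)"
      proof -
        have "(\<integral>x. f x * h x \<partial>lborel) = (\<integral>x. \<psi> (x + z) * h x - \<psi> x * h x \<partial>lborel)"
          by (intro Bochner_Integration.integral_cong) (auto simp: f_def algebra_simps)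
        also have "\<dots> = (\<integral>x. \<psi> (x + z) * h x \<partial>lborel) - (\<integral>x. \<psi> x * h x \<partial>lborel)"
          using i1 i2 by simp
        finally show ?thesis using tr by simp
      qed
      obtain G where G: "C1_field G" "compact (closure {x. G x \<noteq> 0})" "\<forall>x. norm (G x) \<le> 1"
        "\<forall>x. divergence G x = ((- h x) - (- h (x - z))) / norm z"
        using test_field[OF testfn_neg[OF h] z] by auto
      have eqd: "(\<integral>x. \<psi> x * divergence G x \<partial>lborel) = ((\<integral>x. \<psi> x * h (x - z) \<partial>lborel) - (\<integral>x. \<psi> x * h x \<partial>lborel)) / norm z"
      proof -
        have "(\<integral>x. \<psi> x * divergence G x \<partial>lborel) = (\<integral>x. (\<psi> x * h (x - z) - \<psi> x * h x) / norm z \<partial>lborel)"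
        proof (intro Bochner_Integration.integral_cong refl)
          fix x
          have "divergence G x = ((- h x) - (- h (x - z))) / norm z" using G(4) by blast
          then show "\<psi> x * divergence G x = (\<psi> x * h (x - z) - \<psi> x * h x) / norm z"
            by (simp add: field_simps)
        qed
        also have "\<dots> = (\<integral>x. \<psi> x * h (x - z) - \<psi> x * h x \<partial>lborel) / norm z" by simp
        also have "\<dots> = ((\<integral>x. \<psi> x * h (x - z) \<partial>lborel) - (\<integral>x. \<psi> x * h x \<partial>lborel)) / norm z"
          using i2 i3 by simp
        finally show ?thesis .
      qed
      have "(\<integral>x. \<psi> x * divergence G x \<partial>lborel) \<le> V" using V[of G] G(1,2,3) by blast
      then have "(\<integral>x. f x * h x \<partial>lborel) / norm z \<le> V" unfolding eqd fh[symmetric] .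
      then have "(\<integral>x. f x * h x \<partial>lborel) \<le> V * norm z" using z by (simp add: divide_le_eq)
      also have "\<dots> \<le> V0 * norm z" using V0 by (intro mult_right_mono) auto
      finally show ?thesis using hd by linarith
    qed
    have "3/5 * (\<integral>x. \<bar>f x\<bar> \<partial>lborel) \<le> V0 * norm z" by (rule field_le_epsilon) (rule key)
    then have A: "(\<integral>x. \<bar>f x\<bar> \<partial>lborel) \<le> 5/3 * V0 * norm z" by simp
    have "(\<integral>\<^sup>+x. ennreal \<bar>f x\<bar> \<partial>lborel) = ennreal (\<integral>x. \<bar>f x\<bar> \<partial>lborel)"
      by (rule nn_integral_eq_integral) (use fi in auto)
    also have "\<dots> \<le> ennreal (5/3 * V0 * norm z)" using A by (rule ennreal_leI)
    finally show ?thesis by (simp add: f_def)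
  qed
  show ?thesis using main V0(1) by (intro exI[of _ "5/3 * V0"]) auto
qed

lemma ind_integral:
  fixes \<mu> :: "'a::euclidean_space measure" and g :: "'a \<Rightarrow> ennreal"
  assumes sf: "sigma_finite_measure \<mu>" and sets: "sets \<mu> = sets borel"
    and K[measurable]: "K \<in> sets borel" and Kf: "emeasure lborel K < \<infinity>"
    and g[measurable]: "g \<in> borel_measurable borel" and gf: "(\<integral>\<^sup>+z. g z \<partial>\<mu>) < \<infinity>"
  shows "(\<integral>\<^sup>+x. \<integral>\<^sup>+z. g z * (indicator K x + indicator K (x + z)) \<partial>\<mu> \<partial>lborel) < \<infinity>"
proof -
  interpret sigma_finite_measure \<mu> by fact
  interpret P: pair_sigma_finite lborel \<mu> ..
  have [measurable]: "fst \<in> borel_measurable (lborel \<Otimes>\<^sub>M \<mu>)"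
    using measurable_fst[of lborel \<mu>] by (simp add: measurable_lborel2)
  have [measurable]: "snd \<in> borel_measurable (lborel \<Otimes>\<^sub>M \<mu>)"
    using measurable_snd[of lborel \<mu>] by (simp add: measurable_cong_sets[OF refl sets])
  have gm[measurable]: "g \<in> borel_measurable \<mu>" by (simp add: measurable_cong_sets[OF sets refl])
  have "(\<integral>\<^sup>+x. \<integral>\<^sup>+z. g z * (indicator K x + indicator K (x + z)) \<partial>\<mu> \<partial>lborel)
      = (\<integral>\<^sup>+z. \<integral>\<^sup>+x. g z * (indicator K x + indicator K (x + z)) \<partial>lborel \<partial>\<mu>)"
    by (rule P.Fubini[symmetric, where f = "\<lambda>(x,z). g z * (indicator K x + indicator K (x + z))", simplified]) measurable
  also have "\<dots> = (\<integral>\<^sup>+z. g z * (2 * emeasure lborel K) \<partial>\<mu>)"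
  proof (rule nn_integral_cong)
    fix z
    have "(\<integral>\<^sup>+x. g z * (indicator K x + indicator K (x + z)) \<partial>lborel)
        = g z * ((\<integral>\<^sup>+x. indicator K x \<partial>lborel) + (\<integral>\<^sup>+x. indicator K (x + z) \<partial>lborel))"
      by (simp add: nn_integral_cmult nn_integral_add)
    also have "(\<integral>\<^sup>+x. indicator K (x + z) \<partial>lborel) = (\<integral>\<^sup>+x. indicator K x \<partial>lborel)"
      by (rule nn_integral_lborel_translate) simp
    finally show "(\<integral>\<^sup>+x. g z * (indicator K x + indicator K (x + z)) \<partial>lborel) = g z * (2 * emeasure lborel K)"
      by (simp add: mult_2)
  qed
  also have "\<dots> = 2 * emeasure lborel K * (\<integral>\<^sup>+z. g z \<partial>\<mu>)"
    by (subst nn_integral_multc) (simp_all add: mult.commute)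
  also have "\<dots> < \<infinity>" using Kf gf by (simp add: ennreal_mult_less_top)
  finally show ?thesis .
qed

lemma prod_le_sq: "\<bar>a::real\<bar> * \<bar>b\<bar> \<le> a\<^sup>2 + b\<^sup>2"
proof -
  have "0 \<le> (\<bar>a\<bar> - \<bar>b\<bar>)\<^sup>2" by simp
  then have "2 * (\<bar>a\<bar> * \<bar>b\<bar>) \<le> a\<^sup>2 + b\<^sup>2" by (simp add: power2_eq_square algebra_simps abs_mult_self_eq)
  moreover have "0 \<le> \<bar>a\<bar> * \<bar>b\<bar>" by simp
  ultimately show ?thesis by linarith
qed

lemma compact_support_E:
  fixes f :: "'a::euclidean_space \<Rightarrow> real"
  assumes "has_compact_support f"
  obtains S where "compact S" "\<And>x. x \<notin> S \<Longrightarrow> f x = 0"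
proof -
  have "x \<notin> closure {x. f x \<noteq> 0} \<Longrightarrow> f x = 0" for x using closure_subset[of "{x. f x \<noteq> 0}"] by auto
  with assms that show thesis unfolding has_compact_support_def by metis
qed

lemma compact_fin: "compact (S::'a::euclidean_space set) \<Longrightarrow> emeasure lborel S < \<infinity>"
  by (rule emeasure_compact_finite)

lemma compact_borel: "compact (S::'a::euclidean_space set) \<Longrightarrow> S \<in> sets borel"
  by (simp add: compact_imp_closed borel_closed)

lemma lip_diff:
  fixes \<phi> :: "'a::euclidean_space \<Rightarrow> real"
  assumes "L-lipschitz_on UNIV \<phi>"
  shows "\<bar>\<phi> (x + z) - \<phi> x\<bar> \<le> L * norm z"
  using lipschitz_onD[OF assms, of "x + z" x] by (simp add: dist_real_def dist_norm)

lemma lip_sq_bound: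
  fixes \<phi> :: "'a::euclidean_space \<Rightarrow> real"
  assumes "L-lipschitz_on UNIV \<phi>" "\<And>x. \<bar>\<phi> x\<bar> \<le> C"
  shows "(\<phi> (x + z) - \<phi> x)\<^sup>2 \<le> (L\<^sup>2 + 4 * C\<^sup>2) * min ((norm z)\<^sup>2) 1"
proof -
  have L0: "0 \<le> L" using lipschitz_on_nonneg[OF assms(1)] .
  have b1: "\<bar>\<phi> (x + z) - \<phi> x\<bar> \<le> L * norm z" by (rule lip_diff[OF assms(1)])
  have b2: "\<bar>\<phi> (x + z) - \<phi> x\<bar> \<le> 2 * C" using assms(2)[of "x+z"] assms(2)[of x] by linarith
  show ?thesis
  proof (cases "norm z \<le> 1")
    case True
    then have m: "min ((norm z)\<^sup>2) 1 = (norm z)\<^sup>2" by (simp add: power_le_one)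
    have "(\<phi> (x + z) - \<phi> x)\<^sup>2 = \<bar>\<phi> (x + z) - \<phi> x\<bar>\<^sup>2" by simp
    also have "\<dots> \<le> (L * norm z)\<^sup>2" by (rule power_mono[OF b1]) simp
    also have "\<dots> \<le> (L\<^sup>2 + 4 * C\<^sup>2) * (norm z)\<^sup>2" by (simp add: power_mult_distrib algebra_simps)
    finally show ?thesis using m by simp
  next
    case False
    then have m: "min ((norm z)\<^sup>2) 1 = 1"
    proof -
      have "1 \<le> norm z" using False by simp
      then have "1 \<le> (norm z)\<^sup>2" by (simp add: one_le_power)
      then show ?thesis by simp
    qed
    have "(\<phi> (x + z) - \<phi> x)\<^sup>2 = \<bar>\<phi> (x + z) - \<phi> x\<bar>\<^sup>2" by simp
    also have "\<dots> \<le> (2 * C)\<^sup>2" by (rule power_mono[OF b2]) simp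
    also have "\<dots> \<le> (L\<^sup>2 + 4 * C\<^sup>2)" by (simp add: power_mult_distrib)
    finally show ?thesis using m by simp
  qed
qed

theorem mainTheorem15:
  fixes \<mu> :: "'a::euclidean_space measure" and \<psi> \<phi> :: "'a \<Rightarrow> real"
  assumes "levy_measure \<mu>"
    and "Linf \<psi>" and "Linf \<phi>"
    and "(H_L \<mu> \<psi> \<and> H_L \<mu> \<phi>)
       \<or> (H_L \<mu> \<psi> \<and> (\<exists>L. L-lipschitz_on UNIV \<phi>)
            \<and> (has_compact_support \<psi> \<or> has_compact_support \<phi>))
       \<or> (bounded_variation \<psi> \<and> (\<exists>L. L-lipschitz_on UNIV \<phi>)
            \<and> (has_compact_support \<psi> \<or> has_compact_support \<phi>))
       \<or> ((has_compact_support \<psi> \<or> has_compact_support \<phi>)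
            \<and> emeasure \<mu> (UNIV - {0}) < \<infinity>)"
  shows "(\<integral>\<^sup>+ x. (\<integral>\<^sup>+ z. ennreal (\<bar>\<psi> (x + z) - \<psi> x\<bar> * \<bar>\<phi> (x + z) - \<phi> x\<bar>) \<partial>\<mu>) \<partial>lborel) < \<infinity>"
proof -
  have sets: "sets \<mu> = sets borel" and lev: "(\<integral>\<^sup>+z. ennreal (min ((norm z)\<^sup>2) 1) \<partial>\<mu>) < \<infinity>"
    and mu0: "emeasure \<mu> {0} = 0"
    using assms(1) unfolding levy_measure_def by auto
  interpret sigma_finite_measure \<mu> using levy_sigma_finite[OF assms(1)] .
  interpret P: pair_sigma_finite lborel \<mu> ..
  have [measurable]: "\<psi> \<in> borel_measurable borel" "\<phi> \<in> borel_measurable borel"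
    using assms(2,3) by (auto simp: Linf_def)
  obtain C1' where C1': "AE x in lborel. \<bar>\<psi> x\<bar> \<le> C1'" using assms(2) by (auto simp: Linf_def)
  obtain C2' where C2': "AE x in lborel. \<bar>\<phi> x\<bar> \<le> C2'" using assms(3) by (auto simp: Linf_def)
  define C1 where "C1 = max C1' 0"
  define C2 where "C2 = max C2' 0"
  have C1: "AE x in lborel. \<bar>\<psi> x\<bar> \<le> C1" using C1' by eventually_elim (auto simp: C1_def)
  have C2: "AE x in lborel. \<bar>\<phi> x\<bar> \<le> C2" using C2' by eventually_elim (auto simp: C2_def)
  have C1p: "0 \<le> C1" and C2p: "0 \<le> C2" by (auto simp: C1_def C2_def)
  have [measurable]: "fst \<in> borel_measurable (lborel \<Otimes>\<^sub>M \<mu>)"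
    using measurable_fst[of lborel \<mu>] by (simp add: measurable_lborel2)
  have [measurable]: "snd \<in> borel_measurable (lborel \<Otimes>\<^sub>M \<mu>)"
    using measurable_snd[of lborel \<mu>] by (simp add: measurable_cong_sets[OF refl sets])
  have mb: "borel_measurable \<mu> = borel_measurable borel" by (rule measurable_cong_sets[OF sets refl])
  define E where "E x z = ennreal (\<bar>\<psi> (x + z) - \<psi> x\<bar> * \<bar>\<phi> (x + z) - \<phi> x\<bar>)" for x z
  have Em: "(\<lambda>(x, z). E x z) \<in> borel_measurable (lborel \<Otimes>\<^sub>M \<mu>)" unfolding E_def by measurable
  have swap: "(\<integral>\<^sup>+x. \<integral>\<^sup>+z. E x z \<partial>\<mu> \<partial>lborel) = (\<integral>\<^sup>+z. \<integral>\<^sup>+x. E x z \<partial>lborel \<partial>\<mu>)"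
    using P.Fubini[OF Em] by simp
  have levm[measurable]: "(\<lambda>z::'a. ennreal (min ((norm z)\<^sup>2) 1)) \<in> borel_measurable borel" by measurable
  have supp: "\<exists>S. compact S \<and> (\<forall>x z. x \<notin> S \<and> x + z \<notin> S \<longrightarrow> E x z = 0)"
    if "has_compact_support \<psi> \<or> has_compact_support \<phi>"
    using that
  proof
    assume h: "has_compact_support \<psi>"
    obtain S where "compact S" "\<And>x. x \<notin> S \<Longrightarrow> \<psi> x = 0" using compact_support_E[OF h] by blast
    then show ?thesis by (auto simp: E_def)
  next
    assume h: "has_compact_support \<phi>"
    obtain S where "compact S" "\<And>x. x \<notin> S \<Longrightarrow> \<phi> x = 0" using compact_support_E[OF h] by blast
    then show ?thesis by (auto simp: E_def)
  qed
  have main: "(\<integral>\<^sup>+x. \<integral>\<^sup>+z. E x z \<partial>\<mu> \<partial>lborel) < \<infinity>"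
  proof -
    consider (i) "H_L \<mu> \<psi> \<and> H_L \<mu> \<phi>" | (ii) "H_L \<mu> \<psi> \<and> (\<exists>L. L-lipschitz_on UNIV \<phi>) \<and> (has_compact_support \<psi> \<or> has_compact_support \<phi>)"
      | (iii) "bounded_variation \<psi> \<and> (\<exists>L. L-lipschitz_on UNIV \<phi>)" | (iv) "(has_compact_support \<psi> \<or> has_compact_support \<phi>) \<and> emeasure \<mu> (UNIV - {0}) < \<infinity>"
      using assms(4) by blast
    then show ?thesis
    proof cases
    case i
    then have H1: "H_L \<mu> \<psi>" and H2: "H_L \<mu> \<phi>" by auto
    have "(\<integral>\<^sup>+x. \<integral>\<^sup>+z. E x z \<partial>\<mu> \<partial>lborel) \<le>
      (\<integral>\<^sup>+x. (\<integral>\<^sup>+z. ennreal ((\<psi> (x + z) - \<psi> x)\<^sup>2) \<partial>\<mu>) + (\<integral>\<^sup>+z. ennreal ((\<phi> (x + z) - \<phi> x)\<^sup>2) \<partial>\<mu>) \<partial>lborel)"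
    proof (rule nn_integral_mono)
      fix x
      have "(\<integral>\<^sup>+z. E x z \<partial>\<mu>) \<le> (\<integral>\<^sup>+z. ennreal ((\<psi> (x + z) - \<psi> x)\<^sup>2) + ennreal ((\<phi> (x + z) - \<phi> x)\<^sup>2) \<partial>\<mu>)"
        unfolding E_def
        by (intro nn_integral_mono) (simp add: ennreal_plus[symmetric] prod_le_sq del: ennreal_plus)
      also have "\<dots> = (\<integral>\<^sup>+z. ennreal ((\<psi> (x + z) - \<psi> x)\<^sup>2) \<partial>\<mu>) + (\<integral>\<^sup>+z. ennreal ((\<phi> (x + z) - \<phi> x)\<^sup>2) \<partial>\<mu>)"
        by (rule nn_integral_add) (simp_all add: mb)
      finally show "(\<integral>\<^sup>+z. E x z \<partial>\<mu>) \<le> \<dots>" .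
    qed
    also have "\<dots> = (\<integral>\<^sup>+x. \<integral>\<^sup>+z. ennreal ((\<psi> (x + z) - \<psi> x)\<^sup>2) \<partial>\<mu> \<partial>lborel) + (\<integral>\<^sup>+x. \<integral>\<^sup>+z. ennreal ((\<phi> (x + z) - \<phi> x)\<^sup>2) \<partial>\<mu> \<partial>lborel)"
      by (rule nn_integral_add) measurable
    also have "\<dots> < \<infinity>" using H1 H2 by (simp add: H_L_def)
    finally show ?thesis .
  next
    case ii
    then have H1: "H_L \<mu> \<psi>" and "\<exists>L. L-lipschitz_on UNIV \<phi>" and cs: "has_compact_support \<psi> \<or> has_compact_support \<phi>" by auto
    then obtain L where L: "L-lipschitz_on UNIV \<phi>" by blast
    have bd: "\<bar>\<phi> x\<bar> \<le> C2" for x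
      by (rule continuous_AE_bound_everywhere[OF lipschitz_on_continuous_on[OF L] C2])
    obtain S where S: "compact S" "\<And>x z. x \<notin> S \<Longrightarrow> x + z \<notin> S \<Longrightarrow> E x z = 0" using supp[OF cs] by blast
    have Sb[measurable]: "S \<in> sets borel" by (rule compact_borel[OF S(1)])
    define c where "c = L\<^sup>2 + 4 * C2\<^sup>2"
    define g where "g z = ennreal (c * min ((norm z)\<^sup>2) 1)" for z :: 'a
    have gm[measurable]: "g \<in> borel_measurable borel" unfolding g_def by measurable
    have gi: "(\<integral>\<^sup>+z. g z \<partial>\<mu>) < \<infinity>"
    proof -
      have "(\<integral>\<^sup>+z. g z \<partial>\<mu>) = ennreal c * (\<integral>\<^sup>+z. ennreal (min ((norm z)\<^sup>2) 1) \<partial>\<mu>)"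
        unfolding g_def by (subst nn_integral_cmult[symmetric]) (auto simp: mb c_def ennreal_mult)
      then show ?thesis using lev by (simp add: ennreal_mult_less_top)
    qed
    have pw: "E x z \<le> ennreal ((\<psi> (x + z) - \<psi> x)\<^sup>2) + g z * (indicator S x + indicator S (x + z))" for x z
    proof (cases "x \<in> S \<or> x + z \<in> S")
      case True
      then have "1 \<le> (indicator S x + indicator S (x + z) :: ennreal)" by (auto simp: indicator_def)
      then have "g z \<le> g z * (indicator S x + indicator S (x + z))"
        using mult_left_mono[of 1 _ "g z"] by simp
      moreover have "(\<phi> (x + z) - \<phi> x)\<^sup>2 \<le> c * min ((norm z)\<^sup>2) 1"
        unfolding c_def by (rule lip_sq_bound[OF L bd])
      ultimately have "ennreal ((\<phi> (x + z) - \<phi> x)\<^sup>2) \<le> g z * (indicator S x + indicator S (x + z))"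
        unfolding g_def by (meson ennreal_leI order_trans)
      moreover have "E x z \<le> ennreal ((\<psi> (x + z) - \<psi> x)\<^sup>2) + ennreal ((\<phi> (x + z) - \<phi> x)\<^sup>2)"
        unfolding E_def by (simp add: ennreal_plus[symmetric] prod_le_sq del: ennreal_plus)
      ultimately show ?thesis by (meson add_left_mono order_trans)
    next
      case False then show ?thesis using S(2)[of x z] by simp
    qed
    have "(\<integral>\<^sup>+x. \<integral>\<^sup>+z. E x z \<partial>\<mu> \<partial>lborel) \<le>
      (\<integral>\<^sup>+x. (\<integral>\<^sup>+z. ennreal ((\<psi> (x + z) - \<psi> x)\<^sup>2) \<partial>\<mu>) + (\<integral>\<^sup>+z. g z * (indicator S x + indicator S (x + z)) \<partial>\<mu>) \<partial>lborel)"
    proof (rule nn_integral_mono)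
      fix x
      have "(\<integral>\<^sup>+z. E x z \<partial>\<mu>) \<le> (\<integral>\<^sup>+z. ennreal ((\<psi> (x + z) - \<psi> x)\<^sup>2) + g z * (indicator S x + indicator S (x + z)) \<partial>\<mu>)"
        by (intro nn_integral_mono pw)
      also have "\<dots> = (\<integral>\<^sup>+z. ennreal ((\<psi> (x + z) - \<psi> x)\<^sup>2) \<partial>\<mu>) + (\<integral>\<^sup>+z. g z * (indicator S x + indicator S (x + z)) \<partial>\<mu>)"
        using compact_borel[OF S(1)] by (intro nn_integral_add) (simp_all add: mb)
      finally show "(\<integral>\<^sup>+z. E x z \<partial>\<mu>) \<le> \<dots>" .
    qed
    also have "\<dots> = (\<integral>\<^sup>+x. \<integral>\<^sup>+z. ennreal ((\<psi> (x + z) - \<psi> x)\<^sup>2) \<partial>\<mu> \<partial>lborel) + (\<integral>\<^sup>+x. \<integral>\<^sup>+z. g z * (indicator S x + indicator S (x + z)) \<partial>\<mu> \<partial>lborel)"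
      by (intro nn_integral_add) measurable
    also have "\<dots> < \<infinity>"
      using H1 ind_integral[OF levy_sigma_finite[OF assms(1)] sets compact_borel[OF S(1)] compact_fin[OF S(1)] gm gi]
      by (simp add: H_L_def)
    finally show ?thesis .
  next
    case iii
    then have BV: "bounded_variation \<psi>" and "\<exists>L. L-lipschitz_on UNIV \<phi>" by auto
    then obtain L where L: "L-lipschitz_on UNIV \<phi>" by blast
    have L0: "0 \<le> L" using lipschitz_on_nonneg[OF L] .
    have bd: "\<bar>\<phi> x\<bar> \<le> C2" for x
      by (rule continuous_AE_bound_everywhere[OF lipschitz_on_continuous_on[OF L] C2])
    obtain Cb where Cb: "Cb \<ge> 0" "\<And>z. (\<integral>\<^sup>+x. ennreal \<bar>\<psi> (x + z) - \<psi> x\<bar> \<partial>lborel) \<le> ennreal (Cb * norm z)"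
      using bv_translate[OF BV] by blast
    have "integrable lborel \<psi>" using BV by (simp add: bounded_variation_def)
    then have "(\<integral>\<^sup>+x. ennreal (norm (\<psi> x)) \<partial>lborel) < \<infinity>" by (simp add: integrable_iff_bounded)
    then obtain N where N: "(\<integral>\<^sup>+x. ennreal \<bar>\<psi> x\<bar> \<partial>lborel) = ennreal N" "0 \<le> N"
      by (cases "(\<integral>\<^sup>+x. ennreal \<bar>\<psi> x\<bar> \<partial>lborel)") auto
    have a2: "(\<integral>\<^sup>+x. ennreal \<bar>\<psi> (x + z) - \<psi> x\<bar> \<partial>lborel) \<le> ennreal (2 * N)" for z
    proof -
      have "(\<integral>\<^sup>+x. ennreal \<bar>\<psi> (x + z) - \<psi> x\<bar> \<partial>lborel) \<le> (\<integral>\<^sup>+x. ennreal \<bar>\<psi> (x + z)\<bar> + ennreal \<bar>\<psi> x\<bar> \<partial>lborel)"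
        by (intro nn_integral_mono) (simp add: ennreal_plus[symmetric] del: ennreal_plus)
      also have "\<dots> = (\<integral>\<^sup>+x. ennreal \<bar>\<psi> (x + z)\<bar> \<partial>lborel) + (\<integral>\<^sup>+x. ennreal \<bar>\<psi> x\<bar> \<partial>lborel)"
        by (rule nn_integral_add) measurable
      also have "(\<integral>\<^sup>+x. ennreal \<bar>\<psi> (x + z)\<bar> \<partial>lborel) = (\<integral>\<^sup>+x. ennreal \<bar>\<psi> x\<bar> \<partial>lborel)"
        by (rule nn_integral_lborel_translate) measurable
      finally show ?thesis using N by (simp add: ennreal_plus[symmetric] del: ennreal_plus)
    qed
    define K0 where "K0 = L * Cb + 4 * C2 * N"
    have K00: "0 \<le> K0" unfolding K0_def using L0 Cb(1) C2p N(2) by simp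
    have inner: "(\<integral>\<^sup>+x. E x z \<partial>lborel) \<le> ennreal (K0 * min ((norm z)\<^sup>2) 1)" for z
    proof -
      define m where "m = min (L * norm z) (2 * C2)"
      have bm: "\<bar>\<phi> (x + z) - \<phi> x\<bar> \<le> m" for x
        using lip_diff[OF L, of x z] bd[of x] bd[of "x+z"] unfolding m_def by linarith
      have m0: "0 \<le> m" using L0 C2p by (simp add: m_def)
      have "(\<integral>\<^sup>+x. E x z \<partial>lborel) \<le> (\<integral>\<^sup>+x. ennreal m * ennreal \<bar>\<psi> (x + z) - \<psi> x\<bar> \<partial>lborel)"
        unfolding E_def
        by (intro nn_integral_mono) (simp add: ennreal_mult[symmetric] m0 mult.commute mult_right_mono bm del: ennreal_mult)
      also have "\<dots> = ennreal m * (\<integral>\<^sup>+x. ennreal \<bar>\<psi> (x + z) - \<psi> x\<bar> \<partial>lborel)"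
        by (rule nn_integral_cmult) measurable
      also have "\<dots> \<le> ennreal (K0 * min ((norm z)\<^sup>2) 1)"
      proof (cases "norm z \<le> 1")
        case True
        then have mm: "min ((norm z)\<^sup>2) 1 = (norm z)\<^sup>2" by (simp add: power_le_one)
        have "ennreal m * (\<integral>\<^sup>+x. ennreal \<bar>\<psi> (x + z) - \<psi> x\<bar> \<partial>lborel) \<le> ennreal (L * norm z) * ennreal (Cb * norm z)"
          by (intro mult_mono Cb(2) ennreal_leI) (auto simp: m_def)
        also have "\<dots> = ennreal (L * Cb * (norm z)\<^sup>2)"
          using L0 Cb(1) by (simp add: ennreal_mult[symmetric] power2_eq_square mult_ac del: ennreal_mult)
        also have "\<dots> \<le> ennreal (K0 * min ((norm z)\<^sup>2) 1)"
          unfolding mm K0_def using C2p N(2) by (intro ennreal_leI mult_right_mono) auto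
        finally show ?thesis .
      next
        case False
        have mm: "min ((norm z)\<^sup>2) 1 = 1"
        proof -
          have "1 \<le> norm z" using False by simp
          then have "1 \<le> (norm z)\<^sup>2" by (simp add: one_le_power)
          then show ?thesis by simp
        qed
        have "ennreal m * (\<integral>\<^sup>+x. ennreal \<bar>\<psi> (x + z) - \<psi> x\<bar> \<partial>lborel) \<le> ennreal (2 * C2) * ennreal (2 * N)"
          by (intro mult_mono a2 ennreal_leI) (auto simp: m_def)
        also have "\<dots> = ennreal (4 * C2 * N)"
          using C2p N(2) by (simp add: ennreal_mult[symmetric] del: ennreal_mult)
        also have "\<dots> \<le> ennreal (K0 * min ((norm z)\<^sup>2) 1)"
          unfolding mm K0_def using L0 Cb(1) by (intro ennreal_leI) simp
        finally show ?thesis .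
      qed
      finally show ?thesis .
    qed
    have "(\<integral>\<^sup>+z. \<integral>\<^sup>+x. E x z \<partial>lborel \<partial>\<mu>) \<le> (\<integral>\<^sup>+z. ennreal K0 * ennreal (min ((norm z)\<^sup>2) 1) \<partial>\<mu>)"
      by (intro nn_integral_mono order_trans[OF inner]) (simp add: ennreal_mult K00)
    also have "\<dots> = ennreal K0 * (\<integral>\<^sup>+z. ennreal (min ((norm z)\<^sup>2) 1) \<partial>\<mu>)"
      by (rule nn_integral_cmult) (simp add: mb)
    also have "\<dots> < \<infinity>" using lev by (simp add: ennreal_mult_less_top)
    finally show ?thesis using swap by simp
  next
    case iv
    then have cs: "has_compact_support \<psi> \<or> has_compact_support \<phi>" and fin: "emeasure \<mu> (UNIV - {0}) < \<infinity>" by auto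
    obtain S where S: "compact S" "\<And>x z. x \<notin> S \<Longrightarrow> x + z \<notin> S \<Longrightarrow> E x z = 0" using supp[OF cs] by blast
    have Sb[measurable]: "S \<in> sets borel" by (rule compact_borel[OF S(1)])
    define c where "c = 4 * C1 * C2"
    have inner: "(\<integral>\<^sup>+x. E x z \<partial>lborel) \<le> ennreal c * (2 * emeasure lborel S)" for z
    proof -
      have "(\<integral>\<^sup>+x. E x z \<partial>lborel) \<le> (\<integral>\<^sup>+x. ennreal c * (indicator S x + indicator S (x + z)) \<partial>lborel)"
      proof (rule nn_integral_mono_AE)
        have "AE x in lborel. \<bar>\<psi> x\<bar> \<le> C1 \<and> \<bar>\<psi> (x + z)\<bar> \<le> C1 \<and> \<bar>\<phi> x\<bar> \<le> C2 \<and> \<bar>\<phi> (x + z)\<bar> \<le> C2"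
          using C1 C2 AE_lborel_translate[OF C1, of z] AE_lborel_translate[OF C2, of z] by eventually_elim auto
        then show "AE x in lborel. E x z \<le> ennreal c * (indicator S x + indicator S (x + z))"
        proof eventually_elim
          case (elim x)
          show ?case
          proof (cases "x \<in> S \<or> x + z \<in> S")
            case True
            then have "1 \<le> (indicator S x + indicator S (x + z) :: ennreal)" by (auto simp: indicator_def)
            then have "ennreal c \<le> ennreal c * (indicator S x + indicator S (x + z))"
              using mult_left_mono[of 1 _ "ennreal c"] by simp
            moreover have "\<bar>\<psi> (x + z) - \<psi> x\<bar> * \<bar>\<phi> (x + z) - \<phi> x\<bar> \<le> (2 * C1) * (2 * C2)"
              using elim C1p C2p by (intro mult_mono) auto
            then have "E x z \<le> ennreal c" unfolding E_def c_def by (intro ennreal_leI) simp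
            ultimately show ?thesis by (rule order_trans[rotated])
          next
            case False then show ?thesis using S(2)[of x z] by simp
          qed
        qed
      qed
      also have "\<dots> = ennreal c * ((\<integral>\<^sup>+x. indicator S x \<partial>lborel) + (\<integral>\<^sup>+x. indicator S (x + z) \<partial>lborel))"
        by (simp add: nn_integral_cmult nn_integral_add)
      also have "(\<integral>\<^sup>+x. indicator S (x + z) \<partial>lborel) = (\<integral>\<^sup>+x. indicator S x \<partial>lborel)"
        by (rule nn_integral_lborel_translate) simp
      finally show ?thesis by (simp add: mult_2)
    qed
    have "(\<integral>\<^sup>+z. \<integral>\<^sup>+x. E x z \<partial>lborel \<partial>\<mu>) \<le> (\<integral>\<^sup>+z. ennreal c * (2 * emeasure lborel S) \<partial>\<mu>)"
      by (intro nn_integral_mono inner)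
    also have "\<dots> = ennreal c * (2 * emeasure lborel S) * emeasure \<mu> (space \<mu>)"
      by simp
    also have "emeasure \<mu> (space \<mu>) < \<infinity>"
    proof -
      have "space \<mu> = (UNIV - {0}) \<union> {0}" using sets_eq_imp_space_eq[OF sets] by auto
      then have "emeasure \<mu> (space \<mu>) \<le> emeasure \<mu> (UNIV - {0}) + emeasure \<mu> {0}"
      proof -
        have "UNIV - {0} \<in> sets \<mu>" "{0} \<in> sets \<mu>" unfolding sets by auto
        then show ?thesis using emeasure_subadditive[of "UNIV - {0}" \<mu> "{0}"] \<open>space \<mu> = _\<close> by simp
      qed
      then show ?thesis using fin mu0 by (simp add: order_le_less_trans)
    qed
    then have "ennreal c * (2 * emeasure lborel S) * emeasure \<mu> (space \<mu>) < \<infinity>"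
      using compact_fin[OF S(1)] by (simp add: ennreal_mult_less_top)
    finally show ?thesis using swap by simp
  qed
  qed
  then show ?thesis by (simp add: E_def)
qed

end
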